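(* Let $(A,[\cdot,\cdot])$ be a Malcev algebra, $(V;[\cdot,\cdot]_V,\rho)$ an $A$-module Malcev algebra, $\lambda\in\mathbb{K}$, and $T:V\to A$ a $\lambda$-weighted $\mathcal{O}$-operator associated to $(V;[\cdot,\cdot]_V,\rho)$. Then $V$ with the bracket $[a,b]_T=\rho(T(a))b-\rho(T(b))a+\lambda[a,b]_V$ is a Malcev algebra, and $T:(V,[\cdot,\cdot]_T)\to(A,[\cdot,\cdot])$ is a homomorphism of Malcev algebras.
   Context: Field $\mathbb{K}$ of characteristic zero. A Malcev algebra is a vector space with anti-symmetric bracket satisfying $J(x,y,[x,z])=[J(x,y,z),x]$, $J(x,y,z)=[[x,y],z]+[[z,x],y]+[[y,z],x]$. A representation of $A$ on $V$ is linear $\rho:A\to\mathrm{End}(V)$ with $\rho([[x,y],z])=\rho(x)\rho(y)\rho(z)-\rho(z)\rho(x)\rho(y)+\rho(y)\rho([z,x])-\rho([y,z])\rho(x)$. An $A$-module Malcev algebra $(V;[\cdot,\cdot]_V,\rho)$ is a Malcev algebra $(V,[\cdot,\cdot]_V)$ with a representation $\rho$ such that for $x,y\in A$, $a,b,c\in V$: $\rho([x,y])[a,b]_V=\rho(x)[\rho(y)a,b]_V-[\rho(y)\rho(x)a,b]_V-[\rho(x)\rho(y)b,a]_V+\rho(y)[\rho(x)b,a]_V$; $[\rho(x)a,\rho(y)b]_V=[\rho([x,y])a,b]_V-\rho(x)[\rho(y)a,b]_V+\rho(y)\rho(x)[a,b]_V+[\rho(y)\rho(x)b,a]_V$; $[\rho(x)a,[b,c]_V]_V=[[\rho(x)b,a]_V,c]_V-\rho(x)[[b,a]_V,c]_V-[\rho(x)[a,c]_V,b]_V-[[\rho(x)c,b]_V,a]_V$.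 A $\lambda$-weighted $\mathcal{O}$-operator associated to it is a linear $T:V\to A$ with $[T(a),T(b)]=T(\rho(T(a))b-\rho(T(b))a+\lambda[a,b]_V)$ for all $a,b\in V$. *)

theory Defs
  imports Main "HOL.Vector_Spaces"
begin

(* Vector spaces over a field 'k of characteristic zero: the additive structure is the
   type's ab_group_add structure, the scalar multiplication is an explicit parameter. *)

definition jac :: "('a \<Rightarrow> 'a \<Rightarrow> 'a::ab_group_add) \<Rightarrow> 'a \<Rightarrow> 'a \<Rightarrow> 'a \<Rightarrow> 'a" where
  "jac br x y z = br (br x y) z + br (br z x) y + br (br y z) x"

definition malcev :: "('k::field_char_0 \<Rightarrow> 'a \<Rightarrow> 'a) \<Rightarrow> ('a \<Rightarrow> 'a \<Rightarrow> 'a::ab_group_add) \<Rightarrow> bool" where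
  "malcev s br \<longleftrightarrow>
     vector_space s \<and>
     (\<forall>x. Vector_Spaces.linear s s (br x)) \<and>
     (\<forall>y. Vector_Spaces.linear s s (\<lambda>x. br x y)) \<and>
     (\<forall>x y. br x y = - br y x) \<and>
     (\<forall>x y z. jac br x y (br x z) = br (jac br x y z) x)"

definition malcev_rep ::
  "('k::field_char_0 \<Rightarrow> 'a \<Rightarrow> 'a) \<Rightarrow> ('a \<Rightarrow> 'a \<Rightarrow> 'a::ab_group_add)
   \<Rightarrow> ('k \<Rightarrow> 'v \<Rightarrow> 'v) \<Rightarrow> ('a \<Rightarrow> 'v \<Rightarrow> 'v::ab_group_add) \<Rightarrow> bool" where
  "malcev_rep sA br sV \<rho> \<longleftrightarrow>
     vector_space sV \<and>
     (\<forall>x. Vector_Spaces.linear sV sV (\<rho> x)) \<and>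
     (\<forall>v. Vector_Spaces.linear sA sV (\<lambda>x. \<rho> x v)) \<and>
     (\<forall>x y z v. \<rho> (br (br x y) z) v =
        \<rho> x (\<rho> y (\<rho> z v)) - \<rho> z (\<rho> x (\<rho> y v))
        + \<rho> y (\<rho> (br z x) v) - \<rho> (br y z) (\<rho> x v))"

definition module_malcev ::
  "('k::field_char_0 \<Rightarrow> 'a \<Rightarrow> 'a) \<Rightarrow> ('a \<Rightarrow> 'a \<Rightarrow> 'a::ab_group_add)
   \<Rightarrow> ('k \<Rightarrow> 'v \<Rightarrow> 'v) \<Rightarrow> ('v \<Rightarrow> 'v \<Rightarrow> 'v::ab_group_add) \<Rightarrow> ('a \<Rightarrow> 'v \<Rightarrow> 'v) \<Rightarrow> bool" where
  "module_malcev sA br sV brV \<rho> \<longleftrightarrow>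
     malcev sV brV \<and> malcev_rep sA br sV \<rho> \<and>
     (\<forall>x y a b. \<rho> (br x y) (brV a b) =
        \<rho> x (brV (\<rho> y a) b) - brV (\<rho> y (\<rho> x a)) b - brV (\<rho> x (\<rho> y b)) a
        + \<rho> y (brV (\<rho> x b) a)) \<and>
     (\<forall>x y a b. brV (\<rho> x a) (\<rho> y b) =
        brV (\<rho> (br x y) a) b - \<rho> x (brV (\<rho> y a) b) + \<rho> y (\<rho> x (brV a b))
        + brV (\<rho> y (\<rho> x b)) a) \<and>
     (\<forall>x a b c. brV (\<rho> x a) (brV b c) =
        brV (brV (\<rho> x b) a) c - \<rho> x (brV (brV b a) c) - brV (\<rho> x (brV a c)) b
        - brV (brV (\<rho> x c) b) a)"

definition weighted_O_operator ::
  "('k::field_char_0 \<Rightarrow> 'a \<Rightarrow> 'a) \<Rightarrow> ('a \<Rightarrow> 'a \<Rightarrow> 'a::ab_group_add)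
   \<Rightarrow> ('k \<Rightarrow> 'v \<Rightarrow> 'v) \<Rightarrow> ('v \<Rightarrow> 'v \<Rightarrow> 'v::ab_group_add) \<Rightarrow> ('a \<Rightarrow> 'v \<Rightarrow> 'v)
   \<Rightarrow> 'k \<Rightarrow> ('v \<Rightarrow> 'a) \<Rightarrow> bool" where
  "weighted_O_operator sA br sV brV \<rho> lam T \<longleftrightarrow>
     Vector_Spaces.linear sV sA T \<and>
     (\<forall>a b. br (T a) (T b) = T (\<rho> (T a) b - \<rho> (T b) a + sV lam (brV a b)))"

definition malcev_hom ::
  "('k::field_char_0 \<Rightarrow> 'v \<Rightarrow> 'v) \<Rightarrow> ('v \<Rightarrow> 'v \<Rightarrow> 'v::ab_group_add)
   \<Rightarrow> ('k \<Rightarrow> 'a \<Rightarrow> 'a) \<Rightarrow> ('a \<Rightarrow> 'a \<Rightarrow> 'a::ab_group_add) \<Rightarrow> ('v \<Rightarrow> 'a) \<Rightarrow> bool" where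
  "malcev_hom sV brV sA br f \<longleftrightarrow>
     Vector_Spaces.linear sV sA f \<and> (\<forall>a b. f (brV a b) = br (f a) (f b))"

end

theory Submission
  imports Defs "HOL-Library.Product_Plus"
begin

lemma lin_add: "Vector_Spaces.linear s1 s2 f \<Longrightarrow> f (u + v) = f u + f v"
  by (simp add: Vector_Spaces.linear_iff_module_hom module_hom.add)
lemma lin_diff: "Vector_Spaces.linear s1 s2 f \<Longrightarrow> f (u - v) = f u - f v"
  by (simp add: Vector_Spaces.linear_iff_module_hom module_hom.diff)
lemma lin_neg: "Vector_Spaces.linear s1 s2 f \<Longrightarrow> f (- u) = - f u"
  by (simp add: Vector_Spaces.linear_iff_module_hom module_hom.neg)
lemma lin_zero: "Vector_Spaces.linear s1 s2 f \<Longrightarrow> f 0 = 0"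
  by (simp add: Vector_Spaces.linear_iff_module_hom module_hom.zero)
lemma lin_scale: "Vector_Spaces.linear s1 s2 f \<Longrightarrow> f (s1 k u) = s2 k (f u)"
  by (simp add: Vector_Spaces.linear_iff_module_hom module_hom.scale)

lemma self0:
  fixes s :: "'c::field_char_0 \<Rightarrow> 'b::ab_group_add \<Rightarrow> 'b"
    and w :: 'b
  assumes vs: "vector_space s" and h: "w = - w"
  shows "w = 0"
proof -
  have "w + w = 0" using h by (metis add.right_inverse)
  have m: "module s" using vs by (simp add: module_iff_vector_space)
  have "s (1 + 1) w = w + w" by (simp only: module.scale_left_distrib[OF m] module.scale_one[OF m])
  then have "s (1 + 1) w = 0" using \<open>w + w = 0\<close> by simp
  then show ?thesis using vs by (simp add: vector_space.scale_eq_0_iff[OF vs])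
qed

locale mm =
  fixes sA :: "'k::field_char_0 \<Rightarrow> 'a::ab_group_add \<Rightarrow> 'a"
    and br :: "'a \<Rightarrow> 'a \<Rightarrow> 'a"
    and sV :: "'k \<Rightarrow> 'v::ab_group_add \<Rightarrow> 'v"
    and brV :: "'v \<Rightarrow> 'v \<Rightarrow> 'v"
    and \<rho> :: "'a \<Rightarrow> 'v \<Rightarrow> 'v"
    and lam :: 'k
  assumes MA: "malcev sA br" and MM: "module_malcev sA br sV brV \<rho>"
begin

lemma vsA: "vector_space sA" using MA unfolding malcev_def by blast
lemma vsV: "vector_space sV" using MM unfolding module_malcev_def malcev_def by blast

lemma br_lin1: "Vector_Spaces.linear sA sA (\<lambda>x. br x y)" using MA unfolding malcev_def by blast
lemma br_lin2: "Vector_Spaces.linear sA sA (br x)" using MA unfolding malcev_def by blast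
lemma brV_lin1: "Vector_Spaces.linear sV sV (\<lambda>x. brV x y)" using MM unfolding module_malcev_def malcev_def by blast
lemma brV_lin2: "Vector_Spaces.linear sV sV (brV x)" using MM unfolding module_malcev_def malcev_def by blast
lemma rho_lin1: "Vector_Spaces.linear sA sV (\<lambda>x. \<rho> x v)" using MM unfolding module_malcev_def malcev_rep_def by blast
lemma rho_lin2: "Vector_Spaces.linear sV sV (\<rho> x)" using MM unfolding module_malcev_def malcev_rep_def by blast

lemmas lin1 = lin_add[OF br_lin1] lin_diff[OF br_lin1] lin_neg[OF br_lin1] lin_scale[OF br_lin1] lin_zero[OF br_lin1]
  lin_add[OF br_lin2] lin_diff[OF br_lin2] lin_neg[OF br_lin2] lin_scale[OF br_lin2] lin_zero[OF br_lin2]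
  lin_add[OF brV_lin1] lin_diff[OF brV_lin1] lin_neg[OF brV_lin1] lin_scale[OF brV_lin1] lin_zero[OF brV_lin1]
  lin_add[OF brV_lin2] lin_diff[OF brV_lin2] lin_neg[OF brV_lin2] lin_scale[OF brV_lin2] lin_zero[OF brV_lin2]
  lin_add[OF rho_lin1] lin_diff[OF rho_lin1] lin_neg[OF rho_lin1] lin_scale[OF rho_lin1] lin_zero[OF rho_lin1]
  lin_add[OF rho_lin2] lin_diff[OF rho_lin2] lin_neg[OF rho_lin2] lin_scale[OF rho_lin2] lin_zero[OF rho_lin2]

lemma mV: "module sV" using vsV by (simp add: module_iff_vector_space)
lemmas sclV = module.scale_right_distrib[OF mV] module.scale_right_diff_distrib[OF mV]
  module.scale_minus_right[OF mV] module.scale_scale[OF mV]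

lemma br_anti: "br u v = - br v u" using MA unfolding malcev_def by blast
lemma brV_anti: "brV u v = - brV v u" using MM unfolding module_malcev_def malcev_def by blast


lemma br_self: "br u u = 0" using self0[OF vsA br_anti[of u u]] .
lemma brV_self: "brV u u = 0" using self0[OF vsV brV_anti[of u u]] .

lemma malA: "jac br x y (br x z) = br (jac br x y z) x" using MA unfolding malcev_def by blast
lemma malV: "jac brV x y (brV x z) = brV (jac brV x y z) x" using MM unfolding module_malcev_def malcev_def by blast
lemma rep_ax: "\<rho> (br (br x y) z) v =
        \<rho> x (\<rho> y (\<rho> z v)) - \<rho> z (\<rho> x (\<rho> y v))
        + \<rho> y (\<rho> (br z x) v) - \<rho> (br y z) (\<rho> x v)"
  using MM unfolding module_malcev_def malcev_rep_def by blast
lemma mod1_ax: "\<rho> (br x y) (brV a b) =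
        \<rho> x (brV (\<rho> y a) b) - brV (\<rho> y (\<rho> x a)) b - brV (\<rho> x (\<rho> y b)) a
        + \<rho> y (brV (\<rho> x b) a)"
  using MM unfolding module_malcev_def by blast
lemma mod2_ax: "brV (\<rho> x a) (\<rho> y b) =
        brV (\<rho> (br x y) a) b - \<rho> x (brV (\<rho> y a) b) + \<rho> y (\<rho> x (brV a b))
        + brV (\<rho> y (\<rho> x b)) a"
  using MM unfolding module_malcev_def by blast
lemma mod3_ax: "brV (\<rho> x a) (brV b c) =
        brV (brV (\<rho> x b) a) c - \<rho> x (brV (brV b a) c) - brV (\<rho> x (brV a c)) b
        - brV (brV (\<rho> x c) b) a"
  using MM unfolding module_malcev_def by blast

definition sb :: "'a \<times> 'v \<Rightarrow> 'a \<times> 'v \<Rightarrow> 'a \<times> 'v" where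
  "sb P Q = (br (fst P) (fst Q), \<rho> (fst P) (snd Q) - \<rho> (fst Q) (snd P) + sV lam (brV (snd P) (snd Q)))"

lemma sb_fst: "fst (jac sb X Y (sb X Z)) = fst (sb (jac sb X Y Z) X)"
  using malA[of "fst X" "fst Y" "fst Z"] by (simp add: jac_def sb_def)

lemma sb_snd_comb: "snd (jac sb (x,a) (y,b) (sb (x,a) (z,c))) - snd (sb (jac sb (x,a) (y,b) (z,c)) (x,a)) =
  ((\<rho> (br (br z y) x) a - (\<rho> z (\<rho> y (\<rho> x a)) - \<rho> x (\<rho> z (\<rho> y a)) + \<rho> y (\<rho> (br x z) a) - \<rho> (br y x) (\<rho> z a))) + (\<rho> (br (br y x) z) a - (\<rho> y (\<rho> x (\<rho> z a)) - \<rho> z (\<rho> y (\<rho> x a)) + \<rho> x (\<rho> (br z y) a) - \<rho> (br x z) (\<rho> y a))) + (\<rho> (br (br x z) x) b - (\<rho> x (\<rho> z (\<rho> x b)) - \<rho> x (\<rho> x (\<rho> z b)) + \<rho> z (\<rho> (br x x) b) - \<rho> (br z x) (\<rho> x b))) - (\<rho> (br (br x y) x) c - (\<rho> x (\<rho> y (\<rho> x c)) - \<rho> x (\<rho> x (\<rho> y c)) + \<rho> y (\<rho> (br x x) c) - \<rho> (br y x) (\<rho> x c))) - (\<rho> (br (br y x) x) c - (\<rho> y (\<rho> x (\<rho> x c)) - \<rho> x (\<rho> y (\<rho> x c)) + \<rho> x (\<rho> (br x y) c) - \<rho> (br x x) (\<rho> y c)))) + sV (lam) ( - (\<rho> (br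 z y) (brV a a) - (\<rho> z (brV (\<rho> y a) a) - brV (\<rho> y (\<rho> z a)) a - brV (\<rho> z (\<rho> y a)) a + \<rho> y (brV (\<rho> z a) a))) - (brV (\<rho> z a) (\<rho> y a) - (brV (\<rho> (br z y) a) a - \<rho> z (brV (\<rho> y a) a) + \<rho> y (\<rho> z (brV a a)) + brV (\<rho> y (\<rho> z a)) a)) + (\<rho> (br z x) (brV a b) - (\<rho> z (brV (\<rho> x a) b) - brV (\<rho> x (\<rho> z a)) b - brV (\<rho> z (\<rho> x b)) a + \<rho> x (brV (\<rho> z b) a))) + (brV (\<rho> z a) (\<rho> x b) - (brV (\<rho> (br z x) a) b - \<rho> z (brV (\<rho> x a) b) + \<rho> x (\<rho> z (brV a b)) + brV (\<rho> x (\<rho> z b)) a)) + (\<rho> (br x y) (brV a c) - (\<rho> x (brV (\<rho> y a) c) - brV (\<rho> y (\<rho> x a)) c - brV (\<rho> x (\<rho> y c)) a + \<rho> y (brV (\<rho> x c) a))) + (brV (\<rho> x c) (\<rho> y a) - (brV (\<rho> (br x y) c) a - \<rho> x (brV (\<rho> y c) a) + \<rho> y (\<rho> x (brV c a)) + brV (\<rho> y (\<rho> x a)) c)) + (brV (\<rho> x b) (\<rho> x c) - (brV (\<rho> (br x x) b) c - \<rho> x (brV (\<rho> x b) c) + \<rho> x (\<rho> x (brV b c)) + brV (\<rho> x (\<rho> x c)) b))) + sV (lam * lam) ((brV (\<rho> z a) (brV a b) - (brV (brV (\<rho> z a) a) b - \<rho> z (brV (brV a a) b) - brV (\<rho> z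 (brV a b)) a - brV (brV (\<rho> z b) a) a)) - (brV (\<rho> y c) (brV a a) - (brV (brV (\<rho> y a) c) a - \<rho> y (brV (brV a c) a) - brV (\<rho> y (brV c a)) a - brV (brV (\<rho> y a) a) c)) - (brV (\<rho> y a) (brV a c) - (brV (brV (\<rho> y a) a) c - \<rho> y (brV (brV a a) c) - brV (\<rho> y (brV a c)) a - brV (brV (\<rho> y c) a) a)) - (brV (\<rho> x c) (brV a b) - (brV (brV (\<rho> x a) c) b - \<rho> x (brV (brV a c) b) - brV (\<rho> x (brV c b)) a - brV (brV (\<rho> x b) a) c)) - (brV (\<rho> x a) (brV b c) - (brV (brV (\<rho> x b) a) c - \<rho> x (brV (brV b a) c) - brV (\<rho> x (brV a c)) b - brV (brV (\<rho> x c) b) a)) - (brV (\<rho> x b) (brV c a) - (brV (brV (\<rho> x c) b) a - \<rho> x (brV (brV c b) a) - brV (\<rho> x (brV b a)) c - brV (brV (\<rho> x a) c) b)) - (brV (\<rho> x a) (brV c b) - (brV (brV (\<rho> x c) a) b - \<rho> x (brV (brV c a) b) - brV (\<rho> x (brV a b)) c - brV (brV (\<rho> x b) c) a))) + sV (lam * lam * lam) ((jac brV a b (brV a c) - brV (jac brV a b c) a))"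
  by (simp add: jac_def sb_def lin1 sclV br_self[of "x"] br_anti[of "y" "br x z"] br_anti[of "y" "x"] br_anti[of "z" "x"] br_anti[of "z" "y"] brV_anti[of "\<rho> x c" "\<rho> x b"] brV_anti[of "\<rho> y a" "\<rho> x c"] brV_anti[of "\<rho> y c" "\<rho> x a"] brV_anti[of "\<rho> z a" "\<rho> x b"] brV_anti[of "\<rho> z a" "\<rho> y a"] brV_anti[of "\<rho> z b" "\<rho> x a"] brV_anti[of "brV a b" "\<rho> x c"] brV_anti[of "brV a b" "\<rho> z a"] brV_anti[of "brV a c" "brV a b"] brV_self[of "a"] brV_anti[of "b" "\<rho> x c"] brV_anti[of "b" "\<rho> z a"] brV_anti[of "b" "brV a c"] brV_anti[of "b" "a"] brV_anti[of "c" "brV a b"] brV_anti[of "c" "a"] brV_anti[of "c" "b"] algebra_simps)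


lemma rep0: "(\<rho> (br (br x y) z) v - (\<rho> x (\<rho> y (\<rho> z v)) - \<rho> z (\<rho> x (\<rho> y v)) + \<rho> y (\<rho> (br z x) v) - \<rho> (br y z) (\<rho> x v))) = 0"
  by (simp add: rep_ax)
lemma mod10: "(\<rho> (br x y) (brV a b) - (\<rho> x (brV (\<rho> y a) b) - brV (\<rho> y (\<rho> x a)) b - brV (\<rho> x (\<rho> y b)) a + \<rho> y (brV (\<rho> x b) a))) = 0"
  by (simp add: mod1_ax)
lemma mod20: "(brV (\<rho> x a) (\<rho> y b) - (brV (\<rho> (br x y) a) b - \<rho> x (brV (\<rho> y a) b) + \<rho> y (\<rho> x (brV a b)) + brV (\<rho> y (\<rho> x b)) a)) = 0"
  by (simp add: mod2_ax)
lemma mod30: "(brV (\<rho> x a) (brV b c) - (brV (brV (\<rho> x b) a) c - \<rho> x (brV (brV b a) c) - brV (\<rho> x (brV a c)) b - brV (brV (\<rho> x c) b) a)) = 0"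
  by (simp add: mod3_ax)
lemma malV0: "(jac brV a b (brV a c) - brV (jac brV a b c) a) = 0"
  by (simp add: malV)

lemma comb0: "((\<rho> (br (br z y) x) a - (\<rho> z (\<rho> y (\<rho> x a)) - \<rho> x (\<rho> z (\<rho> y a)) + \<rho> y (\<rho> (br x z) a) - \<rho> (br y x) (\<rho> z a))) + (\<rho> (br (br y x) z) a - (\<rho> y (\<rho> x (\<rho> z a)) - \<rho> z (\<rho> y (\<rho> x a)) + \<rho> x (\<rho> (br z y) a) - \<rho> (br x z) (\<rho> y a))) + (\<rho> (br (br x z) x) b - (\<rho> x (\<rho> z (\<rho> x b)) - \<rho> x (\<rho> x (\<rho> z b)) + \<rho> z (\<rho> (br x x) b) - \<rho> (br z x) (\<rho> x b))) - (\<rho> (br (br x y) x) c - (\<rho> x (\<rho> y (\<rho> x c)) - \<rho> x (\<rho> x (\<rho> y c)) + \<rho> y (\<rho> (br x x) c) - \<rho> (br y x) (\<rho> x c))) - (\<rho> (br (br y x) x) c - (\<rho> y (\<rho> x (\<rho> x c)) - \<rho> x (\<rho> y (\<rho> x c)) + \<rho> x (\<rho> (br x y) c) - \<rho> (br x x) (\<rho> y c)))) + sV (lam) ( - (\<rho> (br z y) (brV a a) - (\<rho> z (brV (\<rho> y a) a) - brV (\<rho> y (\<rho> z a)) a - brV (\<rho> z (\<rho> y a)) a + \<rho> y (brV (\<rho> z a) a))) - (brV (\<rho> z a) (\<rho> y a) - (brV (\<rho> (br z y) a) a - \<rho> z (brV (\<rho> y a) a) + \<rho> y (\<rho> z (brV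 a a)) + brV (\<rho> y (\<rho> z a)) a)) + (\<rho> (br z x) (brV a b) - (\<rho> z (brV (\<rho> x a) b) - brV (\<rho> x (\<rho> z a)) b - brV (\<rho> z (\<rho> x b)) a + \<rho> x (brV (\<rho> z b) a))) + (brV (\<rho> z a) (\<rho> x b) - (brV (\<rho> (br z x) a) b - \<rho> z (brV (\<rho> x a) b) + \<rho> x (\<rho> z (brV a b)) + brV (\<rho> x (\<rho> z b)) a)) + (\<rho> (br x y) (brV a c) - (\<rho> x (brV (\<rho> y a) c) - brV (\<rho> y (\<rho> x a)) c - brV (\<rho> x (\<rho> y c)) a + \<rho> y (brV (\<rho> x c) a))) + (brV (\<rho> x c) (\<rho> y a) - (brV (\<rho> (br x y) c) a - \<rho> x (brV (\<rho> y c) a) + \<rho> y (\<rho> x (brV c a)) + brV (\<rho> y (\<rho> x a)) c)) + (brV (\<rho> x b) (\<rho> x c) - (brV (\<rho> (br x x) b) c - \<rho> x (brV (\<rho> x b) c) + \<rho> x (\<rho> x (brV b c)) + brV (\<rho> x (\<rho> x c)) b))) + sV (lam * lam) ((brV (\<rho> z a) (brV a b) - (brV (brV (\<rho> z a) a) b - \<rho> z (brV (brV a a) b) - brV (\<rho> z (brV a b)) a - brV (brV (\<rho> z b) a) a)) - (brV (\<rho> y c) (brV a a) - (brV (brV (\<rho> y a) c) a - \<rho> y (brV (brV a c) a) - brV (\<rho> y (brV c a)) a - brV (brV (\<rho> y a) a) c)) - (brV (\<rho> y a) (brV a c) - (brV (brV (\<rho> y a) a) c - \<rho> y (brV (brV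 a a) c) - brV (\<rho> y (brV a c)) a - brV (brV (\<rho> y c) a) a)) - (brV (\<rho> x c) (brV a b) - (brV (brV (\<rho> x a) c) b - \<rho> x (brV (brV a c) b) - brV (\<rho> x (brV c b)) a - brV (brV (\<rho> x b) a) c)) - (brV (\<rho> x a) (brV b c) - (brV (brV (\<rho> x b) a) c - \<rho> x (brV (brV b a) c) - brV (\<rho> x (brV a c)) b - brV (brV (\<rho> x c) b) a)) - (brV (\<rho> x b) (brV c a) - (brV (brV (\<rho> x c) b) a - \<rho> x (brV (brV c b) a) - brV (\<rho> x (brV b a)) c - brV (brV (\<rho> x a) c) b)) - (brV (\<rho> x a) (brV c b) - (brV (brV (\<rho> x c) a) b - \<rho> x (brV (brV c a) b) - brV (\<rho> x (brV a b)) c - brV (brV (\<rho> x b) c) a))) + sV (lam * lam * lam) ((jac brV a b (brV a c) - brV (jac brV a b c) a)) = 0"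
  by (simp only: rep0 mod10 mod20 mod30 malV0 add_0_left add_0_right diff_0 diff_0_right minus_zero
      module.scale_zero_right[OF mV])

lemma sb_snd: "snd (jac sb X Y (sb X Z)) = snd (sb (jac sb X Y Z) X)"
proof -
  obtain x a y b z c where "X = (x,a)" "Y = (y,b)" "Z = (z,c)" by (cases X, cases Y, cases Z) auto
  then show ?thesis using sb_snd_comb[of x a y b z c] comb0[of z y x a b c] by simp
qed

lemma sb_malcev: "jac sb X Y (sb X Z) = sb (jac sb X Y Z) X"
  using sb_fst[of X Y Z] sb_snd[of X Y Z] by (simp add: prod_eq_iff)

end

theorem corollary4p8:
  fixes sA :: "'k::field_char_0 \<Rightarrow> 'a::ab_group_add \<Rightarrow> 'a"
    and br :: "'a \<Rightarrow> 'a \<Rightarrow> 'a"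
    and sV :: "'k \<Rightarrow> 'v::ab_group_add \<Rightarrow> 'v"
    and brV :: "'v \<Rightarrow> 'v \<Rightarrow> 'v"
    and \<rho> :: "'a \<Rightarrow> 'v \<Rightarrow> 'v"
    and lam :: 'k
    and T :: "'v \<Rightarrow> 'a"
  assumes "malcev sA br"
    and "module_malcev sA br sV brV \<rho>"
    and "weighted_O_operator sA br sV brV \<rho> lam T"
  shows "malcev sV (\<lambda>a b. \<rho> (T a) b - \<rho> (T b) a + sV lam (brV a b))
    \<and> malcev_hom sV (\<lambda>a b. \<rho> (T a) b - \<rho> (T b) a + sV lam (brV a b)) sA br T"
proof -
  interpret mm sA br sV brV \<rho> lam using assms(1,2) by unfold_locales
  have Tlin: "Vector_Spaces.linear sV sA T" using assms(3) unfolding weighted_O_operator_def by blast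
  have Oop: "\<And>a b. br (T a) (T b) = T (\<rho> (T a) b - \<rho> (T b) a + sV lam (brV a b))"
    using assms(3) unfolding weighted_O_operator_def by blast
  define bT where "bT = (\<lambda>a b. \<rho> (T a) b - \<rho> (T b) a + sV lam (brV a b))"
  define g where "g = (\<lambda>u. (T u, u))"
  have g_sb: "sb (g u) (g v) = g (bT u v)" for u v
    using Oop[of u v] by (simp add: sb_def g_def bT_def)
  have g_add: "g u + g v = g (u + v)" for u v
    by (simp add: g_def lin_add[OF Tlin])
  have malT: "jac bT a b (bT a c) = bT (jac bT a b c) a" for a b c
  proof -
    have "jac sb (g a) (g b) (sb (g a) (g c)) = sb (jac sb (g a) (g b) (g c)) (g a)"
      by (rule sb_malcev)
    then have "g (jac bT a b (bT a c)) = g (bT (jac bT a b c) a)"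
      by (simp only: jac_def g_sb g_add)
    then show ?thesis by (simp add: g_def)
  qed
  have anti: "bT u v = - bT v u" for u v
    using brV_anti[of u v] by (simp add: bT_def module.scale_minus_right[OF mV] algebra_simps)
  have lin2: "Vector_Spaces.linear sV sV (bT u)" for u
    unfolding Vector_Spaces.linear_iff
    by (simp add: vsV bT_def lin1 lin_add[OF Tlin] lin_scale[OF Tlin] sclV algebra_simps mult.commute)
  have lin1': "Vector_Spaces.linear sV sV (\<lambda>u. bT u v)" for v
    unfolding Vector_Spaces.linear_iff
    by (simp add: vsV bT_def lin1 lin_add[OF Tlin] lin_scale[OF Tlin] sclV algebra_simps mult.commute)
  have "malcev sV bT"
    unfolding malcev_def using vsV lin2 lin1' anti malT by blast
  moreover have "malcev_hom sV bT sA br T"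
    unfolding malcev_hom_def using Tlin Oop by (simp add: bT_def)
  ultimately show ?thesis by (simp add: bT_def)
qed

end
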